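(* If $n>0$ then $v_1=v_2=1$.
   Context: $k$ is a field of characteristic zero, $\mathcal O_n=k[x]/(x^{n+1})$, elements of $\mathcal O_n$ identified with multiplication operators, $\operatorname{ad}_x(\delta)=x\delta-\delta x$. The order filtration is $\mathcal D^p(\mathcal O_n)=\{\delta\in\operatorname{End}_k(\mathcal O_n):[f_0,[f_1,\dots,[f_p,\delta]\dots]]=0\ \forall f_i\in\mathcal O_n\}$. For $\delta\in\mathcal D^p(\mathcal O_n)$, $\operatorname{ad}_x^p(\delta)$ is multiplication by an element of $\mathcal O_n$ and $\operatorname{ad}_x^p:\mathcal D^p(\mathcal O_n)\to\mathcal O_n$ is $\mathcal O_n$-linear, so its image is an ideal $(x^{v_p})$ of $\mathcal O_n$; $v_p\in\{0,\dots,n\}$ denotes the corresponding exponent. *)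

theory Defs
  imports "HOL-Computational_Algebra.Polynomial"
begin

text \<open>O_n = k[x]/(x^(n+1)) is represented by the polynomials of degree at most n;
  multiplication in O_n is polynomial multiplication followed by reduction mod x^(n+1).\<close>

definition On :: "nat \<Rightarrow> 'k::field_char_0 poly set" where
  "On n = {p. degree p \<le> n}"

definition mulop :: "nat \<Rightarrow> 'k::field_char_0 poly \<Rightarrow> 'k poly \<Rightarrow> 'k poly" where
  "mulop n f = (\<lambda>g. (f * g) mod monom 1 (Suc n))"

definition is_End :: "nat \<Rightarrow> ('k::field_char_0 poly \<Rightarrow> 'k poly) \<Rightarrow> bool" where
  "is_End n \<delta> \<longleftrightarrow> (\<forall>g\<in>On n. \<delta> g \<in> On n)
     \<and> (\<forall>a\<in>On n. \<forall>b\<in>On n. \<delta> (a + b) = \<delta> a + \<delta> b)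
     \<and> (\<forall>c. \<forall>a\<in>On n. \<delta> (smult c a) = smult c (\<delta> a))"

definition comm :: "nat \<Rightarrow> 'k::field_char_0 poly \<Rightarrow> ('k poly \<Rightarrow> 'k poly) \<Rightarrow> 'k poly \<Rightarrow> 'k poly" where
  "comm n f \<delta> = (\<lambda>g. mulop n f (\<delta> g) - \<delta> (mulop n f g))"

fun iter_comm :: "nat \<Rightarrow> 'k::field_char_0 poly list \<Rightarrow> ('k poly \<Rightarrow> 'k poly) \<Rightarrow> 'k poly \<Rightarrow> 'k poly" where
  "iter_comm n [] \<delta> = \<delta>"
| "iter_comm n (f # fs) \<delta> = comm n f (iter_comm n fs \<delta>)"

definition Dp :: "nat \<Rightarrow> nat \<Rightarrow> ('k::field_char_0 poly \<Rightarrow> 'k poly) set" where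
  "Dp n p = {\<delta>. is_End n \<delta> \<and>
     (\<forall>fs. length fs = Suc p \<longrightarrow> set fs \<subseteq> On n \<longrightarrow> (\<forall>g\<in>On n. iter_comm n fs \<delta> g = 0))}"

definition ad_x :: "nat \<Rightarrow> ('k::field_char_0 poly \<Rightarrow> 'k poly) \<Rightarrow> 'k poly \<Rightarrow> 'k poly" where
  "ad_x n = comm n [:0, 1:]"

text \<open>Image of ad_x^p on D^p, as a subset of O_n (elements h whose multiplication
  operator equals ad_x^p(delta) for some delta in D^p).\<close>
definition ad_image :: "nat \<Rightarrow> nat \<Rightarrow> 'k::field_char_0 poly set" where
  "ad_image n p = {h \<in> On n. \<exists>\<delta>\<in>Dp n p. \<forall>g\<in>On n. (ad_x n ^^ p) \<delta> g = mulop n h g}"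

definition xideal :: "nat \<Rightarrow> nat \<Rightarrow> 'k::field_char_0 poly set" where
  "xideal n v = {mulop n (monom 1 v) a | a. a \<in> On n}"

definition vexp :: "'k::field_char_0 itself \<Rightarrow> nat \<Rightarrow> nat \<Rightarrow> nat" where
  "vexp K n p = (THE v. v \<le> n \<and> ad_image n p = (xideal n v :: 'k poly set))"

end

theory Submission
  imports Defs
begin

abbreviation XX :: "nat \<Rightarrow> 'k::field_char_0 poly" where "XX n \<equiv> monom 1 (Suc n)"
abbreviation xx :: "'k::field_char_0 poly" where "xx \<equiv> [:0,1:]"

lemma xx_monom: "(xx::'k::field_char_0 poly) = monom 1 1"
  by (simp add: monom_Suc monom_0)

lemma xx_mult_monom: "(xx::'k::field_char_0 poly) * monom c k = monom c (Suc k)"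
  by (simp add: monom_Suc)

lemma coeff_mod_XX: "i \<le> n \<Longrightarrow> coeff (p mod XX n) i = coeff (p::'k::field_char_0 poly) i"
proof -
  assume i: "i \<le> n"
  have "p = (p div XX n) * XX n + p mod XX n" by (metis div_mult_mod_eq)
  then have "coeff p i = coeff ((p div XX n) * XX n) i + coeff (p mod XX n) i"
    by (metis coeff_add)
  moreover have "coeff ((p div XX n) * XX n) i = 0"
    using i by (simp add: mult.commute[of _ "XX n"] coeff_monom_mult)
  ultimately show ?thesis by simp
qed

lemma degree_mod_XX: "degree ((p::'k::field_char_0 poly) mod XX n) \<le> n"
proof -
  have "XX n \<noteq> (0::'k poly)" by simp
  then have "p mod XX n = 0 \<or> degree (p mod XX n) < degree (XX n :: 'k poly)"
    by (rule degree_mod_less)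
  then show ?thesis by (auto simp: degree_monom_eq)
qed

lemma mod_XX_id: "degree (p::'k::field_char_0 poly) \<le> n \<Longrightarrow> p mod XX n = p"
  by (rule mod_poly_less) (simp add: degree_monom_eq)

lemma On_mod: "(p::'k::field_char_0 poly) mod XX n \<in> On n"
  by (simp add: On_def degree_mod_XX)

lemma monom_On: "k \<le> n \<Longrightarrow> (monom 1 k :: 'k::field_char_0 poly) \<in> On n"
  by (simp add: On_def degree_monom_eq)

lemma swap_diff: "(A::'a::ab_group_add) - d = B \<Longrightarrow> d = A - B"
  by auto

lemma H1: "(x*(A - B mod m)) mod m = (x*A - x*B) mod (m::'a::euclidean_ring_cancel)"
proof -
  have "(x*(A - B mod m)) mod m = ((x*A) mod m - (x*(B mod m)) mod m) mod m"
    by (simp only: right_diff_distrib mod_diff_eq)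
  also have "\<dots> = ((x*A) mod m - (x*B) mod m) mod m" by (simp only: mod_mult_right_eq)
  also have "\<dots> = (x*A - x*B) mod m" by (simp only: mod_diff_eq)
  finally show ?thesis .
qed

lemma H2: "(x*(A mod m) - C) mod m = (x*A - C) mod (m::'a::euclidean_ring_cancel)"
  by (metis mod_diff_eq mod_mult_right_eq)

lemma fin_ar: "-(of_nat n * c) = c \<Longrightarrow> (of_nat (Suc n)::'a::comm_ring_1) * c = 0"
proof -
  assume h: "-(of_nat n * c) = c"
  have "(of_nat (Suc n)::'a) * c = c + of_nat n * c" by (simp add: algebra_simps)
  also have "\<dots> = -(of_nat n * c) + of_nat n * c" by (simp only: h)
  also have "\<dots> = 0" by (rule add.left_inverse)
  finally show ?thesis .
qed

lemma fin_ar2: "(of_nat (Suc n)::'a::field_char_0) * c = 0 \<Longrightarrow> c = 0"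
  by (metis mult_eq_0_iff of_nat_neq_0)

lemma ring_id: "(x::'a::comm_ring_1)*(m*a - c*h*k) - x*(h*k) = (x*m)*a - (c+1)*h*(x*k)"
  by (simp add: algebra_simps)

lemma key_upper:
  fixes \<delta> :: "'k::field_char_0 poly \<Rightarrow> 'k poly"
  assumes R: "\<forall>g\<in>On n. comm n xx \<delta> g = mulop n h g" and z: "\<delta> 0 = 0"
  shows "coeff h 0 = 0"
proof -
  define a where "a = (\<lambda>k. \<delta> (monom 1 k))"
  have Rk: "(xx * a k) mod XX n - \<delta> (monom 1 (Suc k) mod XX n) = (h * monom 1 k) mod XX n"
    if "k \<le> n" for k
  proof -
    have "comm n xx \<delta> (monom 1 k) = mulop n h (monom 1 k)"
      using R monom_On[OF that] by blast
    then show ?thesis unfolding a_def comm_def mulop_def by (simp only: xx_mult_monom)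
  qed
  have D: "(xx * a k) mod XX n = (monom 1 (Suc k) * a 0 - [:of_nat k:] * h * monom 1 k) mod XX n"
    if "k \<le> n" for k
    using that
  proof (induction k)
    case 0
    then show ?case by (simp add: xx_monom)
  next
    case (Suc k)
    have "monom 1 (Suc k) mod XX n = (monom 1 (Suc k) :: 'k poly)"
      using Suc.prems by (simp add: mod_XX_id degree_monom_eq)
    then have e: "a (Suc k) = (xx * a k) mod XX n - (h * monom 1 k) mod XX n"
    proof -
      have "(xx * a k) mod XX n - a (Suc k) = (h * monom 1 k) mod XX n"
        using Rk[of k] Suc.prems \<open>monom 1 (Suc k) mod XX n = monom 1 (Suc k)\<close> unfolding a_def by simp
      then show ?thesis by (rule swap_diff)
    qed
    have "(xx * a (Suc k)) mod XX n = (xx * ((xx * a k) mod XX n) - xx * (h * monom 1 k)) mod XX n"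
      unfolding e by (rule H1)
    also have "\<dots> = (xx * (monom 1 (Suc k) * a 0 - [:of_nat k:] * h * monom 1 k) - xx * (h * monom 1 k)) mod XX n"
    proof -
      have "(xx * a k) mod XX n = (monom 1 (Suc k) * a 0 - [:of_nat k:] * h * monom 1 k) mod XX n"
        using Suc.IH Suc.prems by simp
      then show ?thesis by (metis H2)
    qed
    also have "\<dots> = (monom 1 (Suc (Suc k)) * a 0 - [:of_nat (Suc k):] * h * monom 1 (Suc k)) mod XX n"
    proof -
      have "xx * (monom 1 (Suc k) * a 0 - [:of_nat k:] * h * monom 1 k) - xx * (h * monom 1 k)
          = (xx * monom 1 (Suc k)) * a 0 - [:of_nat k + 1:] * h * (xx * monom 1 k)"
      proof -
        have "[:of_nat k:] + 1 = ([:of_nat k + 1:] :: 'k poly)" by (simp add: one_pCons)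
        then show ?thesis
          using ring_id[of xx "monom 1 (Suc k)" "a 0" "[:of_nat k:]" h "monom 1 k"] by simp
      qed
      moreover have "[:of_nat (Suc k):] = ([:of_nat k + 1:]::'k poly)" by simp
      ultimately show ?thesis by (simp only: xx_mult_monom)
    qed
    finally show ?case .
  qed
  have "XX n mod XX n = (0::'k poly)" by simp
  then have "(xx * a n) mod XX n = (h * monom 1 n) mod XX n"
    using Rk[of n] z by simp
  with D[of n] have F: "coeff ((monom 1 (Suc n) * a 0 - [:of_nat n:] * h * monom 1 n) mod XX n) n
     = coeff ((h * monom 1 n) mod XX n) n" by simp
  have F0: "coeff (monom 1 (Suc n) * a 0) n = 0" by (simp add: coeff_monom_mult)
  have c1: "coeff (h * monom 1 n) n = coeff h 0"
    by (simp only: mult.commute[of h] coeff_monom_mult) simp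
  have F2: "coeff ([:of_nat n:] * h * monom 1 n) n = of_nat n * coeff h 0"
  proof -
    have "[:of_nat n:] * h * monom 1 n = smult (of_nat n) (h * monom 1 n)"
      by (simp only: mult.assoc) simp
    then show ?thesis using c1 by simp
  qed
  have "0 - (of_nat n * coeff h 0) = coeff h 0"
  proof -
    have "coeff h 0 = coeff (h * monom 1 n) n" using c1 by (rule sym)
    also have "\<dots> = coeff ((h * monom 1 n) mod XX n) n" by (rule coeff_mod_XX[OF order_refl, symmetric])
    also have "\<dots> = coeff ((monom 1 (Suc n) * a 0 - [:of_nat n:] * h * monom 1 n) mod XX n) n"
      by (rule F[symmetric])
    also have "\<dots> = coeff (monom 1 (Suc n) * a 0 - [:of_nat n:] * h * monom 1 n) n"
      by (rule coeff_mod_XX[OF order_refl])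
    also have "\<dots> = coeff (monom 1 (Suc n) * a 0) n - coeff ([:of_nat n:] * h * monom 1 n) n"
      by (rule coeff_diff)
    also have "\<dots> = 0 - (of_nat n * coeff h 0)" unfolding F0 F2 by (rule refl)
    finally show ?thesis by (rule sym)
  qed
  then have "- (of_nat n * coeff h 0) = coeff h 0"
    by (simp only: diff_0)
  then have "(of_nat (Suc n) :: 'k) * coeff h 0 = 0"
    by (rule fin_ar)
  then show ?thesis by (rule fin_ar2)
qed

definition modop :: "nat \<Rightarrow> ('k::field_char_0 poly \<Rightarrow> 'k poly) \<Rightarrow> 'k poly \<Rightarrow> 'k poly" where
  "modop n T = (\<lambda>g. T g mod XX n)"

definition commP :: "'k::field_char_0 poly \<Rightarrow> ('k poly \<Rightarrow> 'k poly) \<Rightarrow> 'k poly \<Rightarrow> 'k poly" where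
  "commP f T = (\<lambda>g. f * T g - T (f * g))"

definition good :: "nat \<Rightarrow> ('k::field_char_0 poly \<Rightarrow> 'k poly) \<Rightarrow> bool" where
  "good n T \<longleftrightarrow> (\<forall>a b. T (a + b) = T a + T b) \<and> (\<forall>c a. T (smult c a) = smult c (T a))
     \<and> (\<forall>q. XX n dvd T (q * XX n))"

lemma good_diff: "good n T \<Longrightarrow> T (a - b) = T a - T b"
proof -
  assume g: "good n T"
  have "\<forall>a b. T (a + b) = T a + T b" using g unfolding good_def by blast
  then have "T (a - b + b) = T (a - b) + T b" by blast
  then show ?thesis by simp
qed

lemma good_mod: "good n T \<Longrightarrow> T (g mod XX n) mod XX n = T g mod XX n"
proof -
  assume gd: "good n T"
  have "g = g div XX n * XX n + g mod XX n" by (metis div_mult_mod_eq)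
  moreover have "\<forall>a b. T (a + b) = T a + T b" using gd unfolding good_def by blast
  ultimately have "T g = T (g div XX n * XX n) + T (g mod XX n)" by metis
  moreover have "XX n dvd T (g div XX n * XX n)" using gd unfolding good_def by blast
  ultimately show ?thesis by (simp add: poly_mod_add_left)
qed

lemma comm_modop: "good n T \<Longrightarrow> comm n f (modop n T) = modop n (commP f T)"
proof
  fix g
  assume gd: "good n T"
  have "comm n f (modop n T) g = (f * (T g mod XX n)) mod XX n - T ((f * g) mod XX n) mod XX n"
    unfolding comm_def mulop_def modop_def by simp
  also have "\<dots> = (f * T g) mod XX n - T (f * g) mod XX n"
    by (simp only: mod_mult_right_eq good_mod[OF gd])
  also have "\<dots> = (f * T g - T (f * g)) mod XX n" by (rule poly_mod_diff_left[symmetric])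
  finally show "comm n f (modop n T) g = modop n (commP f T) g"
    unfolding modop_def commP_def .
qed

lemma good_commP: "good n T \<Longrightarrow> good n (commP f T)"
proof -
  assume gd: "good n T"
  have a: "commP f T (a + b) = commP f T a + commP f T b" for a b
    using gd unfolding good_def commP_def by (simp add: distrib_left)
  have s: "commP f T (smult c a) = smult c (commP f T a)" for c a
    using gd unfolding good_def commP_def by (simp add: smult_diff_right)
  have d: "XX n dvd commP f T (q * XX n)" for q
  proof -
    have "XX n dvd T (q * XX n)" "XX n dvd T ((f * q) * XX n)" using gd unfolding good_def by blast+
    then show ?thesis unfolding commP_def by (simp add: mult.assoc dvd_diff)
  qed
  show ?thesis unfolding good_def using a s d by blast
qed

lemma good_End: "good n T \<Longrightarrow> is_End n (modop n T)"
  unfolding is_End_def modop_def good_def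
  by (simp add: On_mod poly_mod_add_left mod_smult_left)

lemma cmon: "[:c:] * monom 1 k = monom (c::'k::field_char_0) k"
  by (simp add: smult_monom)

lemma PX: "pderiv (XX n) = (monom (of_nat (Suc n)) n :: 'k::field_char_0 poly)"
  by (simp only: pderiv_monom mult_1_right diff_Suc_1)

lemma EX1: "(xx::'k::field_char_0 poly) * pderiv (XX n) = [:of_nat (Suc n):] * XX n"
  by (simp only: PX xx_mult_monom cmon)

lemma EX2: "(xx::'k::field_char_0 poly) * pderiv (pderiv (XX n)) = [:of_nat n:] * pderiv (XX n)"
proof (cases n)
  case 0
  then show ?thesis by (simp add: PX monom_0)
next
  case (Suc m)
  have "(xx::'k poly) * pderiv (pderiv (XX n)) = xx * monom (of_nat n * of_nat (Suc n)) m"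
    by (simp only: PX pderiv_monom Suc diff_Suc_1 mult_1_right)
  also have "\<dots> = monom (of_nat n * of_nat (Suc n)) n" by (simp only: xx_mult_monom Suc)
  also have "\<dots> = [:of_nat n:] * pderiv (XX n)" by (simp add: PX smult_monom)
  finally show ?thesis .
qed

definition T1 :: "'k::field_char_0 poly \<Rightarrow> 'k poly \<Rightarrow> 'k poly" where
  "T1 u = (\<lambda>g. xx * u * pderiv g)"

definition T2 :: "nat \<Rightarrow> 'k::field_char_0 poly \<Rightarrow> 'k poly \<Rightarrow> 'k poly" where
  "T2 n u = (\<lambda>g. u * (xx * pderiv (pderiv g) - [:of_nat n:] * pderiv g))"

lemma ring1: "(x::'a::comm_ring_1) * PX = s1 * X \<Longrightarrow> x * u * (q * PX + X * Pq) = X * (u * (s1 * q + x * Pq))"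
proof -
  assume e1: "x * PX = s1 * X"
  have "x * u * (q * PX + X * Pq) = u * q * (x * PX) + X * (u * (x * Pq))" by (simp add: algebra_simps)
  also have "\<dots> = u * q * (s1 * X) + X * (u * (x * Pq))" by (simp only: e1)
  also have "\<dots> = X * (u * (s1 * q + x * Pq))" by (simp add: algebra_simps)
  finally show ?thesis .
qed

lemma good_T1: "good n (T1 u)"
proof -
  have d: "XX n dvd T1 u (q * XX n)" for q
  proof -
    have "T1 u (q * XX n) = XX n * (u * ([:of_nat (Suc n):] * q + xx * pderiv q))"
      unfolding T1_def pderiv_mult by (rule ring1[OF EX1])
    then show ?thesis by simp
  qed
  show ?thesis unfolding good_def using d
    by (simp add: T1_def pderiv_add pderiv_smult algebra_simps)
qed

lemma ring2: "(x::'a::comm_ring_1) * PX = s1 * X \<Longrightarrow> x * PPX = s0 * PX \<Longrightarrow>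
   u * (x * (q * PPX + PX * Pq + (X * PPq + Pq * PX)) - s0 * (q * PX + X * Pq))
   = X * (u * ((s1 + s1 - s0) * Pq + x * PPq))"
proof -
  assume e1: "x * PX = s1 * X" and e2: "x * PPX = s0 * PX"
  have "u * (x * (q * PPX + PX * Pq + (X * PPq + Pq * PX)) - s0 * (q * PX + X * Pq))
     = u * (q * (x * PPX) + (Pq + Pq) * (x * PX) + X * (x * PPq) - s0 * (q * PX) - s0 * (X * Pq))"
    by (simp add: algebra_simps)
  also have "\<dots> = u * (q * (s0 * PX) + (Pq + Pq) * (s1 * X) + X * (x * PPq) - s0 * (q * PX) - s0 * (X * Pq))"
    by (simp only: e1 e2)
  also have "\<dots> = X * (u * ((s1 + s1 - s0) * Pq + x * PPq))"
    by (simp add: algebra_simps)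
  finally show ?thesis .
qed

lemma good_T2: "good n (T2 n u)"
proof -
  have d: "XX n dvd T2 n u (q * XX n)" for q
  proof -
    have "T2 n u (q * XX n) = XX n * (u * (([:of_nat (Suc n):] + [:of_nat (Suc n):] - [:of_nat n:]) * pderiv q + xx * pderiv (pderiv q)))"
      unfolding T2_def pderiv_mult pderiv_add by (rule ring2[OF EX1 EX2])
    then show ?thesis by simp
  qed
  show ?thesis unfolding good_def using d
    by (simp add: T2_def pderiv_add pderiv_smult algebra_simps smult_add_right smult_diff_right mult_smult_right smult_smult mult.commute[of c] del: mult_pCons_left)
qed

lemma commP_mult: "commP f (\<lambda>g. W * g) g = 0"
  unfolding commP_def by (simp add: algebra_simps)

lemma C1: "commP f0 (commP f1 (T1 u)) g = 0"
proof -
  have "commP f1 (T1 u) = (\<lambda>g. (- (xx * u * pderiv f1)) * g)"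
    unfolding commP_def T1_def by (rule ext) (simp add: pderiv_mult algebra_simps del: mult_pCons_left)
  then show ?thesis by (simp only: commP_mult)
qed

lemma S1: "commP f (T2 n u) = (\<lambda>g. u * ([:of_nat n:] * pderiv f * g - xx * pderiv (pderiv f) * g
    - xx * (pderiv f + pderiv f) * pderiv g))"
  unfolding commP_def T2_def
  by (rule ext) (simp add: pderiv_mult pderiv_add algebra_simps del: mult_pCons_left)

lemma S2: "commP f1 (\<lambda>g. u * (A * g - B * g - x * P * pderiv g)) = (\<lambda>g. (u * x * P * pderiv f1) * g)"
  unfolding commP_def
  by (rule ext) (simp add: pderiv_mult algebra_simps del: mult_pCons_left)

lemma C2: "commP f0 (commP f1 (commP f2 (T2 n u))) g = 0"
  unfolding S1 S2 by (rule commP_mult)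

lemma len2: "length fs = Suc (Suc 0) \<Longrightarrow> \<exists>f0 f1. fs = [f0, f1]"
  by (auto simp: length_Suc_conv)

lemma len3: "length fs = Suc (Suc (Suc 0)) \<Longrightarrow> \<exists>f0 f1 f2. fs = [f0, f1, f2]"
  by (auto simp: length_Suc_conv)

lemma Dp1: "modop n (T1 u) \<in> Dp n 1"
proof -
  have "iter_comm n fs (modop n (T1 u)) g = 0" if L: "length fs = Suc 1" for fs g
  proof -
    obtain f0 f1 where fs: "fs = [f0, f1]" using len2[of fs] L by auto
    have "iter_comm n fs (modop n (T1 u)) = modop n (commP f0 (commP f1 (T1 u)))"
      unfolding fs by (simp add: comm_modop good_T1 good_commP)
    then show ?thesis by (simp add: modop_def C1)
  qed
  then show ?thesis unfolding Dp_def using good_End[OF good_T1] by blast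
qed

lemma Dp2: "modop n (T2 n u) \<in> Dp n 2"
proof -
  have "iter_comm n fs (modop n (T2 n u)) g = 0" if L: "length fs = Suc 2" for fs g
  proof -
    obtain f0 f1 f2 where fs: "fs = [f0, f1, f2]" using len3[of fs] L by (auto simp add: numeral_2_eq_2)
    have "iter_comm n fs (modop n (T2 n u)) = modop n (commP f0 (commP f1 (commP f2 (T2 n u))))"
      unfolding fs by (simp add: comm_modop good_T2 good_commP)
    then show ?thesis by (simp add: modop_def C2)
  qed
  then show ?thesis unfolding Dp_def using good_End[OF good_T2] by blast
qed

lemma pxx: "pderiv (xx::'k::field_char_0 poly) = 1"
  by (simp add: pderiv_pCons)

lemma gen1: "(x::'a::comm_ring_1)*(x*u*Pg) - x*u*(x*Pg + g*1) = -(x*u)*g"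
  by (simp add: algebra_simps)

lemma ad1: "(ad_x n ^^ 1) (modop n (T1 u)) g = mulop n (- (xx * u)) g"
proof -
  have "(ad_x n ^^ 1) (modop n (T1 u)) = modop n (commP xx (T1 u))"
    by (simp add: ad_x_def comm_modop good_T1)
  moreover have "commP xx (T1 u) g = - (xx * u) * g"
    unfolding commP_def T1_def pderiv_mult pxx by (rule gen1)
  ultimately show ?thesis by (simp add: modop_def mulop_def)
qed

lemma ad2: "(ad_x n ^^ 2) (modop n (T2 n u)) g = mulop n (u * xx * (1 + 1)) g"
proof -
  have "(ad_x n ^^ 2) (modop n (T2 n u)) = ad_x n (ad_x n (modop n (T2 n u)))"
    by (simp add: numeral_2_eq_2)
  also have "\<dots> = modop n (commP xx (commP xx (T2 n u)))"
    by (simp add: ad_x_def comm_modop good_T2 good_commP)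
  finally have e: "(ad_x n ^^ 2) (modop n (T2 n u)) = modop n (commP xx (commP xx (T2 n u)))" .
  have "commP xx (commP xx (T2 n u)) = (\<lambda>g. (u * xx * (pderiv xx + pderiv xx) * pderiv xx) * g)"
    unfolding S1 S2 ..
  then have "commP xx (commP xx (T2 n u)) g = (u * xx * (1 + 1)) * g" by (simp only: pxx mult_1_right)
  then show ?thesis using e by (simp add: modop_def mulop_def)
qed

definition SS :: "nat \<Rightarrow> 'k::field_char_0 poly set" where
  "SS n = {h \<in> On n. coeff h 0 = 0}"

lemma End_0: "is_End n \<delta> \<Longrightarrow> \<delta> 0 = 0"
proof -
  assume "is_End n \<delta>"
  then have "\<forall>a\<in>On n. \<forall>b\<in>On n. \<delta> (a + b) = \<delta> a + \<delta> b" unfolding is_End_def by blast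
  moreover have "(0::'a poly) \<in> On n" by (simp add: On_def)
  ultimately have "\<delta> (0 + 0) = \<delta> 0 + \<delta> 0" by blast
  then show ?thesis by simp
qed

lemma upper1: "h \<in> ad_image n 1 \<Longrightarrow> h \<in> SS n"
proof -
  assume "h \<in> ad_image n 1"
  then obtain \<delta> where h: "h \<in> On n" and d: "\<delta> \<in> Dp n 1"
    and e: "\<forall>g\<in>On n. (ad_x n ^^ 1) \<delta> g = mulop n h g"
    unfolding ad_image_def by blast
  have "\<forall>g\<in>On n. comm n xx \<delta> g = mulop n h g" using e by (simp add: ad_x_def)
  moreover have "\<delta> 0 = 0" using d End_0 unfolding Dp_def by blast
  ultimately have "coeff h 0 = 0" by (rule key_upper)
  then show ?thesis using h unfolding SS_def by blast
qed

lemma upper2: "h \<in> ad_image n 2 \<Longrightarrow> h \<in> SS n"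
proof -
  assume "h \<in> ad_image n 2"
  then obtain \<delta> where h: "h \<in> On n" and d: "\<delta> \<in> Dp n 2"
    and e: "\<forall>g\<in>On n. (ad_x n ^^ 2) \<delta> g = mulop n h g"
    unfolding ad_image_def by blast
  have "\<forall>g\<in>On n. comm n xx (comm n xx \<delta>) g = mulop n h g" using e by (simp add: ad_x_def numeral_2_eq_2)
  moreover have "\<delta> 0 = 0" using d End_0 unfolding Dp_def by blast
  then have "comm n xx \<delta> 0 = 0" by (simp add: comm_def mulop_def)
  ultimately have "coeff h 0 = 0" by (rule key_upper)
  then show ?thesis using h unfolding SS_def by blast
qed

lemma SS_xx: "h \<in> SS n \<Longrightarrow> \<exists>q. h = xx * q \<and> q \<in> On n"
proof -
  assume a: "h \<in> SS n"
  obtain c q where hq: "h = pCons c q" by (cases h)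
  then have "c = 0" using a unfolding SS_def by simp
  then have hq': "h = xx * q" using hq by simp
  have "degree q \<le> n"
  proof (cases "q = 0")
    case False
    then have "degree h = Suc (degree q)" using hq \<open>c = 0\<close> by simp
    then show ?thesis using a unfolding SS_def On_def by simp
  qed simp
  then show ?thesis using hq' unfolding On_def by blast
qed

lemma gen2: "(u::'a::comm_ring_1) * x * (1 + 1) = x * (u + u)"
  by (simp add: algebra_simps)

lemma lower1: "h \<in> SS n \<Longrightarrow> h \<in> ad_image n 1"
proof -
  assume a: "h \<in> SS n"
  then obtain q where q: "h = xx * q" using SS_xx by blast
  have "\<forall>g\<in>On n. (ad_x n ^^ 1) (modop n (T1 (- q))) g = mulop n h g"
    using ad1[of n "- q"] q by simp
  then show ?thesis using a Dp1[of n "- q"] unfolding ad_image_def SS_def by blast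
qed

lemma lower2: "h \<in> SS n \<Longrightarrow> h \<in> ad_image n 2"
proof -
  assume a: "h \<in> SS n"
  then obtain q where q: "h = xx * q" using SS_xx by blast
  define u where "u = smult (1/2) q"
  have "u + u = q" unfolding u_def by (simp flip: smult_add_left)
  then have hu: "u * xx * (1 + 1) = h" using q gen2[of u xx] by simp
  have "\<forall>g\<in>On n. (ad_x n ^^ 2) (modop n (T2 n u)) g = mulop n h g"
    using ad2[of n u] hu by simp
  then show ?thesis using a Dp2[of n u] unfolding ad_image_def SS_def by blast
qed

lemma xideal1: "xideal n 1 = (SS n :: 'k::field_char_0 poly set)"
proof
  show "xideal n 1 \<subseteq> (SS n :: 'k poly set)"
  proof
    fix h :: "'k poly" assume "h \<in> xideal n 1"
    then obtain a where h: "h = (monom 1 1 * a) mod XX n" unfolding xideal_def mulop_def by blast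
    have "coeff h 0 = 0" unfolding h by (simp add: coeff_mod_XX coeff_monom_mult)
    then show "h \<in> SS n" unfolding SS_def using h On_mod by blast
  qed
next
  show "(SS n :: 'k poly set) \<subseteq> xideal n 1"
  proof
    fix h :: "'k poly" assume a: "h \<in> SS n"
    then obtain q where q: "h = xx * q" "q \<in> On n" using SS_xx by blast
    have hq: "monom 1 1 * q = h" using q(1) xx_monom by metis
    have "degree h \<le> n" using a unfolding SS_def On_def by simp
    then have "mulop n (monom 1 1) q = h"
      unfolding mulop_def hq by (rule mod_XX_id)
    then show "h \<in> xideal n 1" unfolding xideal_def using q(2) by blast
  qed
qed

lemma uniq: "0 < n \<Longrightarrow> v \<le> n \<Longrightarrow> xideal n v = (SS n :: 'k::field_char_0 poly set) \<Longrightarrow> v = 1"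
proof (rule ccontr)
  assume n: "0 < n" and v: "v \<le> n" and e: "xideal n v = (SS n :: 'k poly set)" and ne: "v \<noteq> 1"
  show False
  proof (cases "v = 0")
    case True
    have "mulop n (monom 1 0) 1 = (1 :: 'k poly)"
      unfolding mulop_def by (simp add: monom_0 mod_XX_id)
    moreover have "(1::'k poly) \<in> On n" unfolding On_def by simp
    ultimately have "\<exists>a. (1::'k poly) = mulop n (monom 1 0) a \<and> a \<in> On n"
      by (intro exI[of _ 1]) simp
    then have "(1::'k poly) \<in> xideal n v" unfolding xideal_def True by simp
    then show False using e unfolding SS_def by simp
  next
    case False
    then have v2: "1 < v" using ne by simp
    have "(xx :: 'k poly) \<in> SS n" unfolding SS_def On_def using n by simp
    then obtain a :: "'k poly" where a: "xx = (monom 1 v * a) mod XX n"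
      using e unfolding xideal_def mulop_def by blast
    have "coeff (xx :: 'k poly) 1 = coeff ((monom 1 v * a) mod XX n) 1" using a by simp
    also have "\<dots> = 0" using n v2 by (simp add: coeff_mod_XX coeff_monom_mult)
    finally show False by simp
  qed
qed

theorem lemma6:
  fixes n :: nat
  assumes "n > 0"
  shows "vexp TYPE('k::field_char_0) n 1 = 1 \<and> vexp TYPE('k) n 2 = 1"
proof -
  have i1: "ad_image n 1 = (SS n :: 'k poly set)" using upper1 lower1 by blast
  have i2: "ad_image n 2 = (SS n :: 'k poly set)" using upper2 lower2 by blast
  have x1: "xideal n 1 = (SS n :: 'k poly set)" by (rule xideal1)
  have "vexp TYPE('k) n 1 = 1" unfolding vexp_def
  proof (rule the_equality)
    show "1 \<le> n \<and> ad_image n 1 = (xideal n 1 :: 'k poly set)" using assms i1 x1 by simp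
  next
    fix v assume H: "v \<le> n \<and> ad_image n 1 = (xideal n v :: 'k poly set)"
    then have "xideal n v = (SS n :: 'k poly set)" using i1 by simp
    then show "v = 1" using uniq[of n v] assms H by blast
  qed
  moreover have "vexp TYPE('k) n 2 = 1" unfolding vexp_def
  proof (rule the_equality)
    show "1 \<le> n \<and> ad_image n 2 = (xideal n 1 :: 'k poly set)" using assms i2 x1 by simp
  next
    fix v assume H: "v \<le> n \<and> ad_image n 2 = (xideal n v :: 'k poly set)"
    then have "xideal n v = (SS n :: 'k poly set)" using i2 by simp
    then show "v = 1" using uniq[of n v] assms H by blast
  qed
  ultimately show ?thesis by blast
qed

end
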